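(* Let $n\geq1$ and $\eta\in\Omega$. There exists a unique $J_\eta\subset\Lambda_{3,n}$ such that $\{A_n\beta:\beta\in J_\eta\}=T'_\eta$. Moreover, $J_\eta\in S_{A_n}$.
   Context: Notation: for $\beta\in\mathbb N^t$, $|\beta|$ is the coordinate sum, $\gamma\leq\beta$ is coordinatewise, $\binom{\beta}{\gamma}=\prod_i\binom{\beta_i}{\gamma_i}$; $\Lambda_{t,n}=\{\beta\in\mathbb N^t:1\leq|\beta|\leq n\}$, $\lambda_{t,n}=|\Lambda_{t,n}|$; for $v\in\mathbb N^2$, $\bar v=(\binom{v}{\alpha})_{\alpha\in\Lambda_{2,n}}\in\mathbb C^{\lambda_{2,n}}$. $A_n=\begin{pmatrix}1&1&n\\0&1&n+1\end{pmatrix}$. For $\beta\in\Lambda_{3,n}$, $c_\beta=\sum_{\gamma\in\mathbb N^3,\gamma\leq\beta}(-1)^{|\beta-\gamma|}\binom{\beta}{\gamma}\overline{A_n\gamma}$; $S_{A_n}$ is the set of $J\subset\Lambda_{3,n}$ with $|J|=\lambda_{2,n}$ such that the matrix with rows $c_\beta$ ($\beta\in J$) has non-zero determinant. $\Omega$ is the set of sequences $\eta=(z,d_0,\ldots,d_r)$ with $z\in\{0,1\}$, $d_0=0$, $d_i\geq1$ ($1\leq i\leq r$), $\sum d_i=n$. For $j\in\{1,\ldots,n\}$ let $t$ be unique with $\sum_{i=0}^{t-1}d_i<j\leq\sum_{i=0}^td_i$, $c=j-\sum_{i=0}^{t-1}d_i$; $v_{j,\eta}=(\sum_{i\text{ odd},i<t}d_i+c,0)$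 if $z=1,t$ odd; $(0,\sum_{i\text{ even},i<t}d_i+c)$ if $z=1,t$ even; $(0,\sum_{i\text{ odd},i<t}d_i+c)$ if $z=0,t$ odd; $(\sum_{i\text{ even},i<t}d_i+c,0)$ if $z=0,t$ even. $T_{j,\eta}=\{v_{j,\eta}+p(1,1):0\leq p\leq n-j\}$, $T_{0,\eta}=\{(p,p):1\leq p\leq n\}$. Let $r_{j,\eta}=n\cdot\pi_2(v_{j,\eta})$ (second coordinate) and $T'_\eta=T_{0,\eta}\cup\bigcup_{j=1}^n\{v+(r_{j,\eta},r_{j,\eta}):v\in T_{j,\eta}\}$. *)

theory Defs
  imports Complex_Main "Jordan_Normal_Form.Determinant"
begin

definition Lambda2 :: "nat \<Rightarrow> (nat \<times> nat) set" where
  "Lambda2 n = {(a1, a2). 1 \<le> a1 + a2 \<and> a1 + a2 \<le> n}"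

definition Lambda3 :: "nat \<Rightarrow> (nat \<times> nat \<times> nat) set" where
  "Lambda3 n = {(b1, b2, b3). 1 \<le> b1 + b2 + b3 \<and> b1 + b2 + b3 \<le> n}"

definition lambda2 :: "nat \<Rightarrow> nat" where
  "lambda2 n = card (Lambda2 n)"

text \<open>Multiplication by the matrix A_n = ((1,1,n),(0,1,n+1)).\<close>
fun A_mul :: "nat \<Rightarrow> nat \<times> nat \<times> nat \<Rightarrow> nat \<times> nat" where
  "A_mul n (g1, g2, g3) = (g1 + g2 + n * g3, g2 + (n + 1) * g3)"

fun binom2 :: "nat \<times> nat \<Rightarrow> nat \<times> nat \<Rightarrow> nat" where
  "binom2 (v1, v2) (a1, a2) = (v1 choose a1) * (v2 choose a2)"

fun binom3 :: "nat \<times> nat \<times> nat \<Rightarrow> nat \<times> nat \<times> nat \<Rightarrow> nat" where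
  "binom3 (b1, b2, b3) (g1, g2, g3) = (b1 choose g1) * (b2 choose g2) * (b3 choose g3)"

fun abs3 :: "nat \<times> nat \<times> nat \<Rightarrow> nat" where
  "abs3 (b1, b2, b3) = b1 + b2 + b3"

fun below3 :: "nat \<times> nat \<times> nat \<Rightarrow> (nat \<times> nat \<times> nat) set" where
  "below3 (b1, b2, b3) = {0..b1} \<times> {0..b2} \<times> {0..b3}"

definition vbar :: "nat \<Rightarrow> nat \<times> nat \<Rightarrow> nat \<times> nat \<Rightarrow> complex" where
  "vbar n v \<alpha> = of_nat (binom2 v \<alpha>)"

definition cvec :: "nat \<Rightarrow> nat \<times> nat \<times> nat \<Rightarrow> nat \<times> nat \<Rightarrow> complex" where
  "cvec n \<beta> \<alpha> = (\<Sum>\<gamma>\<in>below3 \<beta>.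
      (-1) ^ (abs3 \<beta> - abs3 \<gamma>) * of_nat (binom3 \<beta> \<gamma>) * vbar n (A_mul n \<gamma>) \<alpha>)"

text \<open>Rows and columns are enumerated by arbitrary bijections with
  {0..<lambda2 n}; the non-vanishing of the determinant does not depend on this choice.\<close>
definition S_A :: "nat \<Rightarrow> (nat \<times> nat \<times> nat) set set" where
  "S_A n = {J. J \<subseteq> Lambda3 n \<and> card J = lambda2 n \<and>
     (\<exists>f g. bij_betw f {..<lambda2 n} J \<and> bij_betw g {..<lambda2 n} (Lambda2 n) \<and>
        det (mat (lambda2 n) (lambda2 n) (\<lambda>(i, j). cvec n (f i) (g j))) \<noteq> 0)}"

text \<open>Omega: eta = (z, [d_0, ..., d_r]).\<close>
definition Omega :: "nat \<Rightarrow> (nat \<times> nat list) set" where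
  "Omega n = {(z, ds). z \<in> {0, 1} \<and> ds \<noteq> [] \<and> ds ! 0 = 0 \<and>
      (\<forall>i\<in>{1..<length ds}. 1 \<le> ds ! i) \<and> sum_list ds = n}"

definition psum :: "nat list \<Rightarrow> nat \<Rightarrow> nat" where
  "psum ds t = (\<Sum>i<t. ds ! i)"

definition tidx :: "nat list \<Rightarrow> nat \<Rightarrow> nat" where
  "tidx ds j = (THE t. psum ds t < j \<and> j \<le> psum ds (Suc t))"

definition oddsum :: "nat list \<Rightarrow> nat \<Rightarrow> nat" where
  "oddsum ds t = (\<Sum>i\<in>{i. i < t \<and> odd i}. ds ! i)"

definition evensum :: "nat list \<Rightarrow> nat \<Rightarrow> nat" where
  "evensum ds t = (\<Sum>i\<in>{i. i < t \<and> even i}. ds ! i)"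

definition v_vec :: "nat \<Rightarrow> nat \<times> nat list \<Rightarrow> nat \<times> nat" where
  "v_vec j eta = (case eta of (z, ds) \<Rightarrow>
     (let t = tidx ds j; c = j - psum ds t in
       if z = 1 then
         (if odd t then (oddsum ds t + c, 0) else (0, evensum ds t + c))
       else
         (if odd t then (0, oddsum ds t + c) else (evensum ds t + c, 0))))"

definition T_set :: "nat \<Rightarrow> nat \<Rightarrow> nat \<times> nat list \<Rightarrow> (nat \<times> nat) set" where
  "T_set n j eta = {(fst (v_vec j eta) + p, snd (v_vec j eta) + p) | p. p \<le> n - j}"

definition T0_set :: "nat \<Rightarrow> (nat \<times> nat) set" where
  "T0_set n = {(p, p) | p. 1 \<le> p \<and> p \<le> n}"

definition r_val :: "nat \<Rightarrow> nat \<Rightarrow> nat \<times> nat list \<Rightarrow> nat" where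
  "r_val n j eta = n * snd (v_vec j eta)"

definition T'_set :: "nat \<Rightarrow> nat \<times> nat list \<Rightarrow> (nat \<times> nat) set" where
  "T'_set n eta = T0_set n \<union>
     (\<Union>j\<in>{1..n}. (\<lambda>(a, b). (a + r_val n j eta, b + r_val n j eta)) ` T_set n j eta)"

end

theory Submission
  imports Defs "HOL-Library.Function_Algebras"
begin


definition du :: "(int \<Rightarrow> complex) \<Rightarrow> int \<Rightarrow> complex" where
  "du h z = h (z+1) - h z"
definition dI :: "(int \<Rightarrow> int \<Rightarrow> complex) \<Rightarrow> int \<Rightarrow> int \<Rightarrow> complex" where
  "dI f i k = f (i+1) k - f i k"
definition dK :: "(int \<Rightarrow> int \<Rightarrow> complex) \<Rightarrow> int \<Rightarrow> int \<Rightarrow> complex" where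
  "dK f i k = f i (k+1) - f i k"

lemma pascal_sum:
  fixes H :: "nat \<Rightarrow> complex"
  shows "(\<Sum>l\<le>Suc c. (-1)^(Suc c - l) * of_nat (Suc c choose l) * H l)
       = (\<Sum>l\<le>c. (-1)^(c-l) * of_nat (c choose l) * (H (Suc l) - H l))"
proof -
  have A: "(\<Sum>l\<le>Suc c. (-1)^(Suc c - l) * of_nat (Suc c choose l) * H l)
     = (-1)^(Suc c) * H 0 + (\<Sum>m\<le>c. (-1)^(c - m) * of_nat (c choose m) * H (Suc m))
        + (\<Sum>m\<le>c. (-1)^(c - m) * of_nat (c choose Suc m) * H (Suc m))"
    by (subst sum.atMost_Suc_shift) (simp add: algebra_simps sum.distrib)
  have B: "(\<Sum>m\<le>c. (-1)^(c - m) * of_nat (c choose Suc m) * H (Suc m))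
     = (\<Sum>l\<le>Suc c. (-1)^(Suc c - l) * of_nat (c choose l) * H l) - (-1)^(Suc c) * H 0"
  proof -
    have "(\<Sum>l\<le>Suc c. (-1)^(Suc c - l) * of_nat (c choose l) * H l) = (-1)^(Suc c - 0) * of_nat (c choose 0) * H 0 + (\<Sum>m\<le>c. (-1)^(Suc c - Suc m) * of_nat (c choose Suc m) * H (Suc m))"
      by (rule sum.atMost_Suc_shift)
    then show ?thesis by (simp del: atMost_Suc)
  qed
  have C: "(\<Sum>l\<le>Suc c. (-1)^(Suc c - l) * of_nat (c choose l) * H l)
     = - (\<Sum>l\<le>c. (-1)^(c - l) * of_nat (c choose l) * H l)"
  proof -
    have "(\<Sum>l\<le>Suc c. (-1)^(Suc c - l) * of_nat (c choose l) * H l)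
        = (\<Sum>l\<le>c. (-1)^(Suc c - l) * of_nat (c choose l) * H l)"
      by (simp add: sum.atMost_Suc)
    also have "\<dots> = (\<Sum>l\<le>c. - ((-1)^(c - l) * of_nat (c choose l) * H l))"
      by (intro sum.cong refl) (simp add: Suc_diff_le)
    finally show ?thesis by (simp add: sum_negf)
  qed
  show ?thesis unfolding A B C by (simp add: algebra_simps sum_subtractf)
qed

lemma du_pow: "(du ^^ c) h z = (\<Sum>l\<le>c. (-1)^(c-l) * of_nat (c choose l) * h (z + int l))"
proof (induction c arbitrary: h)
  case 0 then show ?case by simp
next
  case (Suc c)
  have "(du ^^ Suc c) h z = (du ^^ c) (du h) z" by (simp only: funpow_Suc_right o_apply)
  also have "\<dots> = (\<Sum>l\<le>c. (-1)^(c-l) * of_nat (c choose l) * (h (z + int (Suc l)) - h (z + int l)))"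
    unfolding Suc du_def by (simp add: ac_simps)
  also have "\<dots> = (\<Sum>l\<le>Suc c. (-1)^(Suc c - l) * of_nat (Suc c choose l) * h (z + int l))"
    using pascal_sum[of c "\<lambda>l. h (z + int l)"] by simp
  finally show ?case .
qed

lemma dI_pow: "(dI ^^ c) F i k = (du ^^ c) (\<lambda>z. F z k) i"
proof (induction c arbitrary: F)
  case 0 then show ?case by simp
next
  case (Suc c)
  have e: "(\<lambda>z. dI F z k) = du (\<lambda>z. F z k)" by (simp add: fun_eq_iff dI_def du_def)
  show ?case by (simp only: funpow_Suc_right o_apply Suc e)
qed

lemma dK_pow: "(dK ^^ c) F i k = (du ^^ c) (F i) k"
proof (induction c arbitrary: F)
  case 0 then show ?case by simp
next
  case (Suc c)
  have e: "dK F i = du (F i)" by (simp add: fun_eq_iff dK_def du_def)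
  show ?case by (simp only: funpow_Suc_right o_apply Suc e)
qed


lemma alt_zero:
  fixes g :: "nat \<Rightarrow> complex"
  assumes "\<And>b. b \<le> Y \<Longrightarrow> (\<Sum>m\<le>b. (-1)^(b-m) * of_nat (b choose m) * g m) = 0"
  shows "m \<le> Y \<Longrightarrow> g m = 0"
proof (induction m rule: less_induct)
  case (less m)
  have "(\<Sum>m'\<le>m. (-1)^(m-m') * of_nat (m choose m') * g m') = 0" using assms less by auto
  moreover have "(\<Sum>m'\<le>m. (-1)^(m-m') * of_nat (m choose m') * g m')
      = g m + (\<Sum>m'<m. (-1)^(m-m') * of_nat (m choose m') * g m')"
    by (simp add: lessThan_Suc_atMost[symmetric])
  moreover have "(\<Sum>m'<m. (-1)^(m-m') * of_nat (m choose m') * g m') = 0"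
    using less by (intro sum.neutral) auto
  ultimately show ?case by simp
qed

lemma window_zero:
  fixes h :: "int \<Rightarrow> complex"
  assumes D: "\<And>z. (du ^^ Suc N) h z = 0"
    and W: "\<And>l. l \<le> N \<Longrightarrow> h (s + int l) = 0"
  shows "h z = 0"
proof -
  have E: "(\<Sum>l\<le>Suc N. (-1)^(Suc N-l) * of_nat (Suc N choose l) * h (z + int l)) = 0" for z
    using D[of z] unfolding du_pow .
  define P where "P i = (\<forall>l\<le>N. h (i + int l) = 0)" for i
  have "P z"
  proof (induction z rule: int_induct[where k=s])
    case base then show ?case using W P_def by auto
  next
    case (step1 i)
    have Pi: "\<And>l. l \<le> N \<Longrightarrow> h (i + int l) = 0" using step1 P_def by auto
    have "h (i + int (Suc N)) = 0"
    proof -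
      have "(\<Sum>l\<le>Suc N. (-1)^(Suc N-l) * of_nat (Suc N choose l) * h (i + int l))
          = h (i + int (Suc N)) + (\<Sum>l\<le>N. (-1)^(Suc N-l) * of_nat (Suc N choose l) * h (i + int l))"
        by simp
      moreover have "(\<Sum>l\<le>N. (-1)^(Suc N-l) * of_nat (Suc N choose l) * h (i + int l)) = 0"
        using Pi by (intro sum.neutral) auto
      ultimately show ?thesis using E[of i] by simp
    qed
    then show ?case unfolding P_def
    proof (intro allI impI)
      fix l assume "l \<le> N"
      show "h (i + 1 + int l) = 0"
      proof (cases "l = N")
        case True then show ?thesis using \<open>h (i + int (Suc N)) = 0\<close> by (simp add: ac_simps)
      next
        case False
        then have "Suc l \<le> N" using \<open>l \<le> N\<close> by simp
        then have h1: "h (i + int (Suc l)) = 0" by (rule Pi)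
        have eq: "i + 1 + int l = i + int (Suc l)" by simp
        show ?thesis unfolding eq by (rule h1)
      qed
    qed
  next
    case (step2 i)
    have Pi: "\<And>l. l \<le> N \<Longrightarrow> h (i + int l) = 0" using step2 P_def by auto
    have "h (i - 1) = 0"
    proof -
      have "(\<Sum>l\<le>Suc N. (-1)^(Suc N-l) * of_nat (Suc N choose l) * h (i - 1 + int l))
          = (-1)^(Suc N - 0) * of_nat (Suc N choose 0) * h (i - 1 + int 0) + (\<Sum>m\<le>N. (-1)^(Suc N - Suc m) * of_nat (Suc N choose Suc m) * h (i - 1 + int (Suc m)))"
        by (rule sum.atMost_Suc_shift)
      moreover have "(\<Sum>m\<le>N. (-1)^(Suc N - Suc m) * of_nat (Suc N choose Suc m) * h (i - 1 + int (Suc m))) = 0"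
        using Pi by (intro sum.neutral) auto
      ultimately have "(-1)^(Suc N) * h (i - 1) = 0" using E[of "i-1"] by simp
      then show ?thesis by simp
    qed
    then show ?case unfolding P_def
    proof (intro allI impI)
      fix l assume "l \<le> N"
      show "h (i - 1 + int l) = 0"
      proof (cases l)
        case 0 then show ?thesis using \<open>h (i - 1) = 0\<close> by simp
      next
        case (Suc m)
        then have "h (i + int m) = 0" using Pi \<open>l \<le> N\<close> by auto
        then show ?thesis using Suc by (simp add: ac_simps)
      qed
    qed
  qed
  then show ?thesis unfolding P_def by (metis add.right_neutral of_nat_0 zero_le)
qed

definition B :: "nat \<Rightarrow> int \<Rightarrow> complex" where
  "B a z = (of_int z :: complex) gchoose a"

lemma du_B: "(du ^^ c) (B a) = (if c \<le> a then B (a - c) else 0)"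
proof (induction c)
  case 0 then show ?case by simp
next
  case (Suc c)
  have "(du ^^ Suc c) (B a) = du ((du ^^ c) (B a))" by simp
  also have "\<dots> = (if Suc c \<le> a then B (a - Suc c) else 0)"
  proof (cases "Suc c \<le> a")
    case True
    then obtain m where m: "a - c = Suc m" "a - Suc c = m" by (metis Suc_diff_le diff_Suc_Suc le_SucE Suc_leD)
    have "du (B (Suc m)) = B m"
      by (simp add: fun_eq_iff du_def B_def gbinomial_Suc_Suc)
    then show ?thesis using Suc True m by simp
  next
    case False
    then have "du ((du ^^ c) (B a)) = 0"
      unfolding Suc by (cases "c = a") (auto simp: fun_eq_iff du_def B_def)
    then show ?thesis using False by simp
  qed
  finally show ?case .
qed

lemma B_zero: "B a 0 = (if a = 0 then 1 else 0)"
  by (cases a) (auto simp: B_def gbinomial_0)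

definition d12 :: "(int \<Rightarrow> int \<Rightarrow> complex) \<Rightarrow> int \<Rightarrow> int \<Rightarrow> complex" where
  "d12 f i k = f (i+1) (k+1) - f i k"

lemma d12_eq: "d12 f = dI f + dK f + dI (dK f)"
  by (simp add: fun_eq_iff d12_def dI_def dK_def)

lemma dI_add: "dI (f + g) = dI f + dI g" by (simp add: fun_eq_iff dI_def)
lemma dK_add: "dK (f + g) = dK f + dK g" by (simp add: fun_eq_iff dK_def)
lemma dI_zero: "dI 0 = 0" by (simp add: fun_eq_iff dI_def)
lemma dK_zero: "dK 0 = 0" by (simp add: fun_eq_iff dK_def)

lemma dIp_add: "(dI ^^ c) (f + g) = (dI ^^ c) f + (dI ^^ c) g"
  by (induction c) (simp_all only: funpow.simps id_apply o_apply dI_add)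
lemma dKp_add: "(dK ^^ c) (f + g) = (dK ^^ c) f + (dK ^^ c) g"
  by (induction c) (simp_all only: funpow.simps id_apply o_apply dK_add)
lemma dIp_zero: "(dI ^^ c) 0 = 0" by (induction c) (simp_all only: funpow.simps id_apply o_apply dI_zero)
lemma dKp_zero: "(dK ^^ c) 0 = 0" by (induction c) (simp_all only: funpow.simps id_apply o_apply dK_zero)

lemma dI_dK: "dI (dK f) = dK (dI f)" by (simp add: fun_eq_iff dI_def dK_def)
lemma dKp_dI: "(dK ^^ e) (dI f) = dI ((dK ^^ e) f)"
  by (induction e) (simp_all add: dI_dK)

definition Qd :: "nat \<Rightarrow> (int \<Rightarrow> int \<Rightarrow> complex) \<Rightarrow> bool" where
  "Qd d f = (\<forall>c e. d < c + e \<longrightarrow> (dI ^^ c) ((dK ^^ e) f) = 0)"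

lemma Qd_d12: assumes "Qd d f" shows "Qd (d - 1) (d12 f)"
  unfolding Qd_def
proof (intro allI impI)
  fix c e assume ce: "d - 1 < c + e"
  note Qf = assms[unfolded Qd_def, rule_format]
  have 1: "(dI ^^ c) ((dK ^^ e) (dI f)) = 0"
  proof -
    have "(dI ^^ c) ((dK ^^ e) (dI f)) = (dI ^^ Suc c) ((dK ^^ e) f)"
      by (simp only: dKp_dI funpow_Suc_right o_apply)
    also have "\<dots> = 0" by (rule Qf) (use ce in arith)
    finally show ?thesis .
  qed
  have 2: "(dI ^^ c) ((dK ^^ e) (dK f)) = 0"
  proof -
    have "(dI ^^ c) ((dK ^^ e) (dK f)) = (dI ^^ c) ((dK ^^ Suc e) f)"
      by (simp only: funpow_Suc_right o_apply)
    also have "\<dots> = 0" by (rule Qf) (use ce in arith)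
    finally show ?thesis .
  qed
  have 3: "(dI ^^ c) ((dK ^^ e) (dI (dK f))) = 0"
  proof -
    have "(dI ^^ c) ((dK ^^ e) (dI (dK f))) = (dI ^^ Suc c) ((dK ^^ Suc e) f)"
      by (simp only: dKp_dI funpow_Suc_right o_apply)
    also have "\<dots> = 0" by (rule Qf) (use ce in arith)
    finally show ?thesis .
  qed
  show "(dI ^^ c) ((dK ^^ e) (d12 f)) = 0"
    unfolding d12_eq dKp_add dIp_add 1 2 3 by (simp only: add_0)
qed

lemma Qd_d12_pow: assumes "Qd d f" shows "Qd (d - p) ((d12 ^^ p) f)"
proof (induction p)
  case 0 then show ?case using assms by simp
next
  case (Suc p)
  have e: "d - Suc p = d - p - 1" by simp
  show ?case unfolding e by (simp only: funpow.simps o_apply) (rule Qd_d12[OF Suc])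
qed

definition Tr :: "(int \<Rightarrow> int \<Rightarrow> complex) \<Rightarrow> int \<Rightarrow> int \<Rightarrow> complex" where
  "Tr H i k = H (i+k) k"

lemma dI_Tr: "dI (Tr H) = Tr (dI H)" by (simp add: fun_eq_iff dI_def Tr_def ac_simps)
lemma dK_Tr: "dK (Tr H) = Tr (d12 H)" by (simp add: fun_eq_iff dK_def d12_def Tr_def ac_simps)
lemma dIp_Tr: "(dI ^^ c) (Tr H) = Tr ((dI ^^ c) H)"
  by (induction c) (simp_all only: funpow.simps o_apply id_apply dI_Tr)
lemma dKp_Tr: "(dK ^^ c) (Tr H) = Tr ((d12 ^^ c) H)"
  by (induction c) (simp_all only: funpow.simps o_apply id_apply dK_Tr)

lemma Tr_zero: "Tr 0 = 0" by (simp add: fun_eq_iff Tr_def)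

lemma Qd0_d12: assumes "Qd 0 g" shows "d12 g = 0"
proof -
  note Qf = assms[unfolded Qd_def, rule_format]
  have "(dI ^^ 1) ((dK ^^ 0) g) = 0" "(dI ^^ 0) ((dK ^^ 1) g) = 0" "(dI ^^ 1) ((dK ^^ 1) g) = 0"
    by (rule Qf; simp)+
  then have "dI g = 0" "dK g = 0" "dI (dK g) = 0" by (simp_all only: funpow_0 One_nat_def funpow.simps o_apply id_apply)
  then show ?thesis unfolding d12_eq by (simp only: add_0)
qed

lemma Tr_vanish:
  assumes "Qd n H" and "n < a + p"
  shows "(dI ^^ a) ((dK ^^ p) (Tr H)) = 0"
proof (cases "a = 0")
  case False
  note Qf = Qd_d12_pow[OF assms(1), of p, unfolded Qd_def, rule_format]
  have "n - p < a + (0::nat)" using assms(2) False by presburger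
  then have "(dI ^^ a) ((dK ^^ 0) ((d12 ^^ p) H)) = 0" by (rule Qf)
  then have "(dI ^^ a) ((d12 ^^ p) H) = 0" by (simp only: funpow_0 id_apply)
  then show ?thesis by (simp only: dKp_Tr dIp_Tr Tr_zero)
next
  case True
  define q where "q = p - 1"
  have q: "p = Suc q" "n - q = 0" using assms(2) True unfolding q_def by auto
  have "Qd (n - q) ((d12 ^^ q) H)" by (rule Qd_d12_pow[OF assms(1)])
  then have "d12 ((d12 ^^ q) H) = 0" using q(2) Qd0_d12 by (simp only:)
  then have "(d12 ^^ p) H = 0" using q(1) by (simp only: funpow.simps o_apply)
  then have "(dI ^^ a) ((d12 ^^ p) H) = 0" using True by (simp only: funpow_0 id_apply)
  then show ?thesis by (simp only: dKp_Tr dIp_Tr Tr_zero)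
qed

lemma dKp_sum:
  "(dK ^^ e) (\<lambda>i k. \<Sum>\<alpha>\<in>S. F \<alpha> i * G \<alpha> k) = (\<lambda>i k. \<Sum>\<alpha>\<in>S. F \<alpha> i * (du ^^ e) (G \<alpha>) k)"
proof (intro ext)
  fix i k
  show "(dK ^^ e) (\<lambda>i k. \<Sum>\<alpha>\<in>S. F \<alpha> i * G \<alpha> k) i k = (\<Sum>\<alpha>\<in>S. F \<alpha> i * (du ^^ e) (G \<alpha>) k)"
    unfolding dK_pow du_pow sum_distrib_left
    by (subst sum.swap) (simp only: ac_simps)
qed

lemma dIp_sum:
  "(dI ^^ c) (\<lambda>i k. \<Sum>\<alpha>\<in>S. F \<alpha> i * G \<alpha> k) = (\<lambda>i k. \<Sum>\<alpha>\<in>S. (du ^^ c) (F \<alpha>) i * G \<alpha> k)"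
proof (intro ext)
  fix i k
  show "(dI ^^ c) (\<lambda>i k. \<Sum>\<alpha>\<in>S. F \<alpha> i * G \<alpha> k) i k = (\<Sum>\<alpha>\<in>S. (du ^^ c) (F \<alpha>) i * G \<alpha> k)"
    unfolding dI_pow du_pow sum_distrib_left sum_distrib_right
    by (subst sum.swap) (simp only: ac_simps)
qed

lemma Qd_L:
  assumes "\<And>\<alpha>. \<alpha> \<in> S \<Longrightarrow> fst \<alpha> + snd \<alpha> \<le> n"
  shows "Qd n (\<lambda>i k. \<Sum>\<alpha>\<in>S. (x \<alpha> * B (fst \<alpha>) i) * B (snd \<alpha>) k)"
  unfolding Qd_def
proof (intro allI impI)
  fix c e assume ce: "n < c + e"
  have "(dI ^^ c) ((dK ^^ e) (\<lambda>i k. \<Sum>\<alpha>\<in>S. (x \<alpha> * B (fst \<alpha>) i) * B (snd \<alpha>) k))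
     = (\<lambda>i k. \<Sum>\<alpha>\<in>S. (du ^^ c) (\<lambda>i. x \<alpha> * B (fst \<alpha>) i) i * (du ^^ e) (B (snd \<alpha>)) k)"
    unfolding dKp_sum dIp_sum ..
  also have "\<dots> = 0"
  proof -
    have "(du ^^ c) (\<lambda>i. x \<alpha> * B (fst \<alpha>) i) i * (du ^^ e) (B (snd \<alpha>)) k = 0" if "\<alpha> \<in> S" for \<alpha> i k
    proof -
      have cm: "(du ^^ c) (\<lambda>i. x \<alpha> * B (fst \<alpha>) i) i = x \<alpha> * (du ^^ c) (B (fst \<alpha>)) i"
        by (simp add: du_pow sum_distrib_left ac_simps)
      have "c > fst \<alpha> \<or> e > snd \<alpha>" using assms[OF that] ce by auto
      then show ?thesis unfolding cm du_B by auto
    qed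
    then show ?thesis unfolding fun_eq_iff zero_fun_def by (auto intro!: sum.neutral)
  qed
  finally show "(dI ^^ c) ((dK ^^ e) (\<lambda>i k. \<Sum>\<alpha>\<in>S. (x \<alpha> * B (fst \<alpha>) i) * B (snd \<alpha>) k)) = 0" .
qed


definition Lf :: "nat \<Rightarrow> (nat \<times> nat \<Rightarrow> complex) \<Rightarrow> int \<Rightarrow> int \<Rightarrow> complex" where
  "Lf n x = (\<lambda>i k. \<Sum>\<alpha>\<in>Lambda2 n. (x \<alpha> * B (fst \<alpha>) i) * B (snd \<alpha>) k)"

lemma sum3: "(\<Sum>\<gamma>\<in>S1\<times>S2\<times>S3. f \<gamma>) = (\<Sum>x\<in>S1. \<Sum>y\<in>S2. \<Sum>z\<in>S3. f (x,y,z))"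
  by (simp add: sum.cartesian_product)

lemma vbar_B: "vbar n v \<alpha> = B (fst \<alpha>) (int (fst v)) * B (snd \<alpha>) (int (snd v))"
  by (cases v; cases \<alpha>) (simp add: vbar_def B_def binomial_gbinomial)

lemma K1: "(\<Sum>\<alpha>\<in>Lambda2 n. cvec n \<beta> \<alpha> * x \<alpha>) =
  (\<Sum>\<gamma>\<in>below3 \<beta>. (-1)^(abs3 \<beta> - abs3 \<gamma>) * of_nat (binom3 \<beta> \<gamma>) *
       Lf n x (int (fst (A_mul n \<gamma>))) (int (snd (A_mul n \<gamma>))))"
  unfolding cvec_def Lf_def vbar_B sum_distrib_right sum_distrib_left
  by (subst sum.swap) (simp only: ac_simps)

lemma K1': "Lf n x (int (fst (A_mul n (g1,g2,g3)))) (int (snd (A_mul n (g1,g2,g3))))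
   = Tr (Lf n x) (int g1 - int g3) (int g2 + int (n+1) * int g3)"
proof -
  have e1: "int (g1 + g2 + n * g3) = (int g1 - int g3) + (int g2 + int (n+1) * int g3)"
    by (simp add: algebra_simps)
  have e2: "int (g2 + (n+1) * g3) = int g2 + int (n+1) * int g3" by (simp only: of_nat_add of_nat_mult)
  show ?thesis by (simp only: Tr_def A_mul.simps fst_conv snd_conv e1 e2)
qed

lemma sign2: "l \<le> a \<Longrightarrow> m \<le> p \<Longrightarrow> (-1::complex)^(a + p - (l + m)) = (-1)^(a-l) * (-1)^(p-m)"
proof -
  assume "l \<le> a" "m \<le> p"
  then have "a + p - (l + m) = (a - l) + (p - m)" by simp
  then show ?thesis by (simp add: power_add)
qed

lemma K2: "(\<Sum>\<gamma>\<in>below3 (a,p,0). (-1)^(abs3 (a,p,0) - abs3 \<gamma>) * of_nat (binom3 (a,p,0) \<gamma>) *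
       Lf n x (int (fst (A_mul n \<gamma>))) (int (snd (A_mul n \<gamma>))))
   = (dI ^^ a) ((dK ^^ p) (Tr (Lf n x))) 0 0"
proof -
  define M where "M = Tr (Lf n x)"
  have R: "(dI ^^ a) ((dK ^^ p) M) 0 0 = (\<Sum>l\<le>a. \<Sum>m\<le>p. ((-1)^(a-l) * of_nat (a choose l)) * ((-1)^(p-m) * of_nat (p choose m)) * M (int l) (int m))"
    by (simp add: dI_pow du_pow dK_pow sum_distrib_left ac_simps)
  have L: "(\<Sum>\<gamma>\<in>below3 (a,p,0). (-1)^(abs3 (a,p,0) - abs3 \<gamma>) * of_nat (binom3 (a,p,0) \<gamma>) *
       Lf n x (int (fst (A_mul n \<gamma>))) (int (snd (A_mul n \<gamma>))))
     = (\<Sum>l\<le>a. \<Sum>m\<le>p. ((-1)^(a-l) * of_nat (a choose l)) * ((-1)^(p-m) * of_nat (p choose m)) * M (int l) (int m))"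
    unfolding below3.simps sum3 atLeast0AtMost
  proof (intro sum.cong refl)
    fix l m assume lm: "l \<in> {..a}" "m \<in> {..p}"
    show "(\<Sum>z\<in>{..0}. (-1)^(abs3 (a,p,0) - abs3 (l,m,z)) * of_nat (binom3 (a,p,0) (l,m,z)) *
       Lf n x (int (fst (A_mul n (l,m,z)))) (int (snd (A_mul n (l,m,z)))))
      = ((-1)^(a-l) * of_nat (a choose l)) * ((-1)^(p-m) * of_nat (p choose m)) * M (int l) (int m)"
      using lm unfolding K1' M_def by (simp add: sign2)
  qed
  show ?thesis unfolding L R[unfolded M_def] M_def ..
qed

lemma K3: "(\<Sum>\<gamma>\<in>below3 (0,p,b). (-1)^(abs3 (0,p,b) - abs3 \<gamma>) * of_nat (binom3 (0,p,b) \<gamma>) *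
       Lf n x (int (fst (A_mul n \<gamma>))) (int (snd (A_mul n \<gamma>))))
   = (\<Sum>m\<le>b. (-1)^(b-m) * of_nat (b choose m) * (dK ^^ p) (Tr (Lf n x)) (- int m) (int (n+1) * int m))"
proof -
  define M where "M = Tr (Lf n x)"
  have R: "(\<Sum>m\<le>b. (-1)^(b-m) * of_nat (b choose m) * (dK ^^ p) M (- int m) (int (n+1) * int m))
     = (\<Sum>m\<le>b. \<Sum>l\<le>p. ((-1)^(p-l) * of_nat (p choose l)) * ((-1)^(b-m) * of_nat (b choose m)) * M (- int m) (int l + int (n+1) * int m))"
    by (simp add: dK_pow du_pow sum_distrib_left ac_simps)
  have L: "(\<Sum>\<gamma>\<in>below3 (0,p,b). (-1)^(abs3 (0,p,b) - abs3 \<gamma>) * of_nat (binom3 (0,p,b) \<gamma>) *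
       Lf n x (int (fst (A_mul n \<gamma>))) (int (snd (A_mul n \<gamma>))))
     = (\<Sum>l\<le>p. \<Sum>m\<le>b. ((-1)^(p-l) * of_nat (p choose l)) * ((-1)^(b-m) * of_nat (b choose m)) * M (- int m) (int l + int (n+1) * int m))"
    unfolding below3.simps sum3 atLeast0AtMost
    apply (simp only: atMost_0 sum.insert_if finite.emptyI empty_iff if_False sum.empty add_0_right)
  proof (intro sum.cong refl)
    fix l m assume lm: "l \<in> {..p}" "m \<in> {..b}"
    show "(-1)^(abs3 (0,p,b) - abs3 (0,l,m)) * of_nat (binom3 (0,p,b) (0,l,m)) *
       Lf n x (int (fst (A_mul n (0,l,m)))) (int (snd (A_mul n (0,l,m))))
      = ((-1)^(p-l) * of_nat (p choose l)) * ((-1)^(b-m) * of_nat (b choose m)) * M (- int m) (int l + int (n+1) * int m)"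
      using lm unfolding K1' M_def by (simp add: sign2)
  qed
  show ?thesis unfolding L R[unfolded M_def] M_def by (rule sum.swap)
qed

lemma du_scale: "(du ^^ c) (\<lambda>i. k * f i) z = k * (du ^^ c) f z"
  by (simp add: du_pow sum_distrib_left ac_simps)

lemma du_B0: "(du ^^ c) (B a) 0 = (if c = a then 1 else 0)"
  unfolding du_B by (auto simp: B_zero)

lemma dK_const:
  assumes "dK G = 0"
  shows "G i k = G i 0"
proof (induction k rule: int_induct[where k=0])
  case base then show ?case by simp
next
  case (step1 k)
  have "dK G i k = 0" using assms by simp
  then show ?case using step1 by (simp add: dK_def)
next
  case (step2 k)
  have "dK G i (k - 1) = 0" using assms by simp
  then show ?case using step2 by (simp add: dK_def)
qed

lemma finite_Lambda2: "finite (Lambda2 n)"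
proof -
  have "Lambda2 n \<subseteq> {0..n} \<times> {0..n}" unfolding Lambda2_def by auto
  then show ?thesis by (rule finite_subset) simp
qed

lemma kernel:
  fixes x :: "nat \<times> nat \<Rightarrow> complex" and J :: "(nat \<times> nat \<times> nat) set"
  assumes cond: "\<And>\<beta>. \<beta> \<in> J \<Longrightarrow> (\<Sum>\<alpha>\<in>Lambda2 n. cvec n \<beta> \<alpha> * x \<alpha>) = 0"
    and struct: "\<And>p. p \<le> n \<Longrightarrow> \<exists>X Y. X + Y = n - p \<and> (\<forall>a. 1 \<le> a \<and> a \<le> X \<longrightarrow> (a,p,0) \<in> J)
        \<and> (\<forall>b. 1 \<le> b \<and> b \<le> Y \<longrightarrow> (0,p,b) \<in> J) \<and> (1 \<le> p \<longrightarrow> (0,p,0) \<in> J)"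
    and \<alpha>: "\<alpha> \<in> Lambda2 n"
  shows "x \<alpha> = 0"
proof -
  define L where "L = Lf n x"
  define M where "M = Tr L"
  have QL: "Qd n L" unfolding L_def Lf_def by (rule Qd_L) (auto simp: Lambda2_def)
  have V: "\<And>a p. n < a + p \<Longrightarrow> (dI ^^ a) ((dK ^^ p) M) = 0" unfolding M_def by (rule Tr_vanish[OF QL])
  have M00: "M 0 0 = 0"
    unfolding M_def Tr_def L_def Lf_def by (intro sum.neutral) (auto simp: B_zero Lambda2_def)
  have C2: "(dI ^^ a) ((dK ^^ p) M) 0 0 = 0" if "(a,p,0) \<in> J" for a p
    using cond[OF that] unfolding K1 K2 M_def L_def .
  have C3: "(\<Sum>m\<le>b. (-1)^(b-m) * of_nat (b choose m) * (dK ^^ p) M (- int m) (int (n+1) * int m)) = 0"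
    if "(0,p,b) \<in> J" for p b
    using cond[OF that] unfolding K1 K3 M_def L_def .
  have main: "(dK ^^ (n + 1 - m)) M = 0" if "m \<le> n + 1" for m
    using that
  proof (induction m)
    case 0 then show ?case using V[of 0 "n+1"] by simp
  next
    case (Suc m)
    define p where "p = n - m"
    have p: "n + 1 - Suc m = p" "n + 1 - m = Suc p" "p \<le> n" using Suc.prems unfolding p_def by auto
    define G where "G = (dK ^^ p) M"
    have dKG: "dK G = 0" using Suc.IH Suc.prems p unfolding G_def by (simp add: zero_fun_def)
    have Gc: "G i k = G i 0" for i k by (rule dK_const[OF dKG])
    define h where "h z = G z 0" for z
    define N where "N = n - p"
    have D: "(du ^^ Suc N) h z = 0" for z
    proof -
      have "(du ^^ Suc N) h z = (dI ^^ Suc N) G z 0" unfolding dI_pow h_def ..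
      also have "\<dots> = 0" unfolding G_def using V[of "Suc N" p] p unfolding N_def by simp
      finally show ?thesis .
    qed
    obtain X Y where XY: "X + Y = n - p" "\<And>a. 1 \<le> a \<Longrightarrow> a \<le> X \<Longrightarrow> (a,p,0) \<in> J"
      "\<And>b. 1 \<le> b \<Longrightarrow> b \<le> Y \<Longrightarrow> (0,p,b) \<in> J" "1 \<le> p \<Longrightarrow> (0,p,0) \<in> J"
      using struct[OF p(3)] by blast
    have hpos: "h (int j) = 0" if "j \<le> X" for j
    proof (rule alt_zero[where g="\<lambda>j. h (int j)", OF _ that])
      fix b assume b: "b \<le> X"
      have "(\<Sum>m\<le>b. (-1)^(b-m) * of_nat (b choose m) * h (int m)) = (du ^^ b) h 0"
        unfolding du_pow by simp
      also have "\<dots> = (dI ^^ b) ((dK ^^ p) M) 0 0" unfolding dI_pow h_def G_def ..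
      also have "\<dots> = 0"
      proof (cases "b = 0")
        case False then show ?thesis using C2 XY(2)[of b] b by simp
      next
        case True
        show ?thesis
        proof (cases "p = 0")
          case True then show ?thesis using \<open>b = 0\<close> M00 by simp
        next
          case False then show ?thesis using \<open>b = 0\<close> C2[of 0 p] XY(4) by simp
        qed
      qed
      finally show "(\<Sum>m\<le>b. (-1)^(b-m) * of_nat (b choose m) * h (int m)) = 0" .
    qed
    have hneg: "h (- int j) = 0" if "j \<le> Y" for j
    proof (rule alt_zero[where g="\<lambda>j. h (- int j)", OF _ that])
      fix b assume b: "b \<le> Y"
      show "(\<Sum>m\<le>b. (-1)^(b-m) * of_nat (b choose m) * h (- int m)) = 0"
      proof (cases "b = 0")
        case True then show ?thesis using hpos[of 0] by simp
      next
        case False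
        have "(\<Sum>m\<le>b. (-1)^(b-m) * of_nat (b choose m) * h (- int m))
           = (\<Sum>m\<le>b. (-1)^(b-m) * of_nat (b choose m) * (dK ^^ p) M (- int m) (int (n+1) * int m))"
          unfolding h_def G_def[symmetric] by (intro sum.cong refl) (metis Gc)
        also have "\<dots> = 0" using C3 XY(3)[of b] b False by simp
        finally show ?thesis .
      qed
    qed
    have W: "h (- int Y + int l) = 0" if "l \<le> N" for l
    proof (cases "l \<le> Y")
      case True
      then have eq: "- int Y + int l = - int (Y - l)" by simp
      show ?thesis unfolding eq by (rule hneg) simp
    next
      case False
      then have eq: "- int Y + int l = int (l - Y)" by simp
      have "l - Y \<le> X" using that XY(1) unfolding N_def by simp
      then show ?thesis unfolding eq by (rule hpos)
    qed
    have h0: "h z = 0" for z by (rule window_zero[OF D W])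
    have "G = 0"
    proof (intro ext)
      fix i k show "G i k = 0 i k" using Gc[of i k] h0[of i] unfolding h_def by simp
    qed
    then show ?case using p unfolding G_def by simp
  qed
  from main[of "n+1"] have "M = 0" by simp
  then have L0: "L = 0"
  proof -
    assume M0: "M = 0"
    show "L = 0"
    proof (intro ext)
      fix v1 v2
      have "L v1 v2 = M (v1 - v2) v2" unfolding M_def Tr_def by simp
      then show "L v1 v2 = 0 v1 v2" using M0 by simp
    qed
  qed
  have "(dI ^^ fst \<alpha>) ((dK ^^ snd \<alpha>) L) 0 0 = (\<Sum>\<alpha>'\<in>Lambda2 n. (if \<alpha>' = \<alpha> then x \<alpha>' else 0))"
    unfolding L_def Lf_def dKp_sum dIp_sum du_scale du_B0
    by (intro sum.cong refl) (auto simp: prod_eq_iff)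
  also have "\<dots> = x \<alpha>" using \<alpha> by (simp add: finite_Lambda2)
  finally show ?thesis using L0 dKp_zero dIp_zero by simp
qed


lemma ex_step:
  fixes g :: "nat \<Rightarrow> nat"
  assumes "g 0 < j" "j \<le> g m"
  shows "\<exists>t<m. g t < j \<and> j \<le> g (Suc t)"
  using assms(2)
proof (induction m)
  case 0 then show ?case using assms(1) by simp
next
  case (Suc m)
  show ?case
  proof (cases "j \<le> g m")
    case True then show ?thesis using Suc.IH by (meson less_SucI)
  next
    case False then show ?thesis using Suc.prems by (intro exI[of _ m]) auto
  qed
qed

lemma psum_mono: "t1 \<le> t2 \<Longrightarrow> psum ds t1 \<le> psum ds t2"
  unfolding psum_def by (rule sum_mono2) auto

lemma psum_Suc: "psum ds (Suc t) = psum ds t + ds ! t"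
  unfolding psum_def by simp

definition xt :: "nat list \<Rightarrow> nat \<Rightarrow> nat \<Rightarrow> bool" where
  "xt ds z j = (odd (tidx ds j) = (z = 1))"

definition Cnt :: "(nat \<Rightarrow> bool) \<Rightarrow> nat \<Rightarrow> nat" where
  "Cnt P N = card {j\<in>{1..N}. P j}"

context
  fixes n :: nat and ds :: "nat list"
  assumes ne: "ds \<noteq> []" and d0: "ds ! 0 = 0" and dpos: "\<forall>i\<in>{1..<length ds}. 1 \<le> ds ! i"
    and dsum: "sum_list ds = n"
begin

lemma psum_len: "psum ds (length ds) = n"
  unfolding psum_def dsum[symmetric] sum_list_sum_nth by (simp add: atLeast0LessThan)

lemma psum_ge_n: "length ds \<le> t \<Longrightarrow> n \<le> psum ds t"
  using psum_mono[of "length ds" t ds] psum_len by simp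

lemma psum_1: "psum ds 1 = 0"
  unfolding psum_def using d0 by simp

lemma tidx_spec:
  assumes "1 \<le> j" "j \<le> n"
  shows "psum ds (tidx ds j) < j \<and> j \<le> psum ds (Suc (tidx ds j))"
proof -
  have "psum ds 0 < j" using assms by (simp add: psum_def)
  then obtain t where t: "t < length ds" "psum ds t < j" "j \<le> psum ds (Suc t)"
    using ex_step[of "psum ds" j "length ds"] assms psum_len by auto
  have uniq: "t' = t" if "psum ds t' < j \<and> j \<le> psum ds (Suc t')" for t'
  proof (rule ccontr)
    assume "t' \<noteq> t"
    then have "Suc t' \<le> t \<or> Suc t \<le> t'" by auto
    then show False
    proof
      assume "Suc t' \<le> t" then have "psum ds (Suc t') \<le> psum ds t" by (rule psum_mono)
      then show False using that t by simp
    next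
      assume "Suc t \<le> t'" then have "psum ds (Suc t) \<le> psum ds t'" by (rule psum_mono)
      then show False using that t by simp
    qed
  qed
  have "tidx ds j = t" unfolding tidx_def
  proof (rule the_equality)
    show "psum ds t < j \<and> j \<le> psum ds (Suc t)" using t by simp
  next
    fix t' assume "psum ds t' < j \<and> j \<le> psum ds (Suc t')" then show "t' = t" by (rule uniq)
  qed
  then show ?thesis using t by simp
qed

lemma tidx_eq:
  assumes "psum ds t < j" "j \<le> psum ds (Suc t)"
  shows "tidx ds j = t"
proof -
  have uniq: "t' = t" if "psum ds t' < j \<and> j \<le> psum ds (Suc t')" for t'
  proof (rule ccontr)
    assume "t' \<noteq> t"
    then have "Suc t' \<le> t \<or> Suc t \<le> t'" by auto
    then show False
    proof
      assume "Suc t' \<le> t" then have "psum ds (Suc t') \<le> psum ds t" by (rule psum_mono)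
      then show False using that assms by simp
    next
      assume "Suc t \<le> t'" then have "psum ds (Suc t) \<le> psum ds t'" by (rule psum_mono)
      then show False using that assms by simp
    qed
  qed
  show ?thesis unfolding tidx_def
  proof (rule the_equality)
    show "psum ds t < j \<and> j \<le> psum ds (Suc t)" using assms by simp
  next
    fix t' assume "psum ds t' < j \<and> j \<le> psum ds (Suc t')" then show "t' = t" by (rule uniq)
  qed
qed

lemma tidx_bounds:
  assumes "1 \<le> j" "j \<le> n"
  shows "1 \<le> tidx ds j" "tidx ds j < length ds"
proof -
  have s: "psum ds (tidx ds j) < j" "j \<le> psum ds (Suc (tidx ds j))" using tidx_spec[OF assms] by auto
  show "1 \<le> tidx ds j"
  proof (rule ccontr)
    assume "\<not> 1 \<le> tidx ds j"
    then have "tidx ds j = 0" by simp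
    then show False using s(2) psum_1 assms by simp
  qed
  show "tidx ds j < length ds"
  proof (rule ccontr)
    assume "\<not> tidx ds j < length ds"
    then have "n \<le> psum ds (tidx ds j)" by (intro psum_ge_n) simp
    then show False using s(1) assms by simp
  qed
qed

lemma tidx_1: assumes "1 \<le> n" shows "tidx ds 1 = 1"
proof -
  have b: "1 \<le> tidx ds 1" "tidx ds 1 < length ds" using tidx_bounds[of 1] assms by auto
  have s: "psum ds (tidx ds 1) < 1" using tidx_spec[of 1] assms by auto
  show ?thesis
  proof (rule ccontr)
    assume "tidx ds 1 \<noteq> 1"
    then have "2 \<le> tidx ds 1" using b by simp
    then have "psum ds 2 \<le> psum ds (tidx ds 1)" by (rule psum_mono)
    moreover have "psum ds 2 = ds ! 1" using psum_Suc[of ds 1] psum_1 by (simp add: numeral_2_eq_2)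
    moreover have "1 \<le> ds ! 1" using dpos b \<open>2 \<le> tidx ds 1\<close> by auto
    ultimately show False using s by simp
  qed
qed

lemma tidx_next:
  assumes "1 \<le> j" "Suc j \<le> n"
  shows "(j < psum ds (Suc (tidx ds j)) \<and> tidx ds (Suc j) = tidx ds j) \<or>
         (j = psum ds (Suc (tidx ds j)) \<and> tidx ds (Suc j) = Suc (tidx ds j))"
proof -
  obtain t where t_def: "tidx ds j = t" by simp
  have s: "psum ds t < j" "j \<le> psum ds (Suc t)" using tidx_spec[of j] assms unfolding t_def by auto
  show ?thesis
  proof (cases "j < psum ds (Suc t)")
    case True
    then have "tidx ds (Suc j) = t" using s by (intro tidx_eq) auto
    then show ?thesis using True t_def by simp
  next
    case False
    then have j: "j = psum ds (Suc t)" using s by simp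
    have "Suc t < length ds"
    proof (rule ccontr)
      assume "\<not> Suc t < length ds"
      then have "n \<le> psum ds (Suc t)" by (intro psum_ge_n) simp
      then show False using j assms by simp
    qed
    then have "1 \<le> ds ! Suc t" using dpos by auto
    then have "Suc j \<le> psum ds (Suc (Suc t))" using j psum_Suc[of ds "Suc t"] by simp
    then have "tidx ds (Suc j) = Suc t" using j by (intro tidx_eq) auto
    then show ?thesis using j t_def by simp
  qed
qed

definition cnt :: "bool \<Rightarrow> nat \<Rightarrow> nat" where
  "cnt q j = card {j'\<in>{1..j}. odd (tidx ds j') = q}"

lemma cnt_formula:
  assumes "1 \<le> j" "j \<le> n"
  shows "cnt q j = (\<Sum>i\<in>{i. i < tidx ds j \<and> odd i = q}. ds ! i)
                   + (if odd (tidx ds j) = q then j - psum ds (tidx ds j) else 0)"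
  using assms
proof (induction j rule: dec_induct)
  case base
  have n1: "1 \<le> n" using assms by simp
  have t1: "tidx ds 1 = 1" by (rule tidx_1[OF n1])
  have A: "{j'\<in>{1..1}. odd (tidx ds j') = q} = (if q then {1} else {})" using t1 by (cases q) auto
  have B: "{i. i < tidx ds 1 \<and> odd i = q} = (if q then {} else {0})" using t1 by (cases q) (auto simp: odd_pos)
  show ?case unfolding cnt_def A B t1 psum_1 using d0 by (cases q) simp_all
next
  case (step j)
  have j1: "1 \<le> j" "Suc j \<le> n" using step by auto
  have IH: "cnt q j = (\<Sum>i\<in>{i. i < tidx ds j \<and> odd i = q}. ds ! i)
                   + (if odd (tidx ds j) = q then j - psum ds (tidx ds j) else 0)"
    using step j1 by simp
  have "{j'\<in>{1..Suc j}. odd (tidx ds j') = q} = (if odd (tidx ds (Suc j)) = q then insert (Suc j) {j'\<in>{1..j}. odd (tidx ds j') = q} else {j'\<in>{1..j}. odd (tidx ds j') = q})"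
    by (auto simp: le_Suc_eq)
  then have cS: "cnt q (Suc j) = cnt q j + (if odd (tidx ds (Suc j)) = q then 1 else 0)"
    unfolding cnt_def by simp
  obtain t where t_def: "tidx ds j = t" by simp
  have s: "psum ds t < j" "j \<le> psum ds (Suc t)" using tidx_spec[of j] j1 unfolding t_def by auto
  from tidx_next[OF j1] show ?case
  proof
    assume a: "j < psum ds (Suc (tidx ds j)) \<and> tidx ds (Suc j) = tidx ds j"
    then have ts: "tidx ds (Suc j) = t" unfolding t_def by (elim conjE)
    have e: "Suc j - psum ds t = (j - psum ds t) + 1" using s by simp
    have "cnt q (Suc j) = cnt q j + (if odd t = q then 1 else 0)" using cS unfolding ts .
    also have "\<dots> = (\<Sum>i\<in>{i. i < t \<and> odd i = q}. ds ! i) + (if odd t = q then Suc j - psum ds t else 0)"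
      unfolding IH t_def e by simp
    finally show ?thesis unfolding ts .
  next
    assume a: "j = psum ds (Suc (tidx ds j)) \<and> tidx ds (Suc j) = Suc (tidx ds j)"
    have setS: "{i. i < Suc t \<and> odd i = q} = (if odd t = q then insert t {i. i < t \<and> odd i = q} else {i. i < t \<and> odd i = q})"
      by (auto simp: less_Suc_eq)
    have sumS: "(\<Sum>i\<in>{i. i < Suc t \<and> odd i = q}. ds ! i) = (\<Sum>i\<in>{i. i < t \<and> odd i = q}. ds ! i) + (if odd t = q then ds ! t else 0)"
      unfolding setS by simp
    have jt: "j - psum ds t = ds ! t" using a psum_Suc[of ds t] unfolding t_def by simp
    have one: "Suc j - psum ds (Suc t) = 1" using a unfolding t_def by simp
    have ts: "tidx ds (Suc j) = Suc t" using a unfolding t_def by (elim conjE)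
    have "cnt q (Suc j) = cnt q j + (if odd (Suc t) = q then 1 else 0)" using cS unfolding ts .
    also have "\<dots> = (\<Sum>i\<in>{i. i < t \<and> odd i = q}. ds ! i) + (if odd t = q then ds ! t else 0)
        + (if odd (Suc t) = q then 1 else 0)" unfolding IH t_def jt ..
    also have "\<dots> = (\<Sum>i\<in>{i. i < Suc t \<and> odd i = q}. ds ! i) + (if odd (Suc t) = q then Suc j - psum ds (Suc t) else 0)"
      unfolding sumS one ..
    finally show ?thesis unfolding ts .
  qed
qed



lemma v_form:
  assumes z: "z \<in> {0,1}" and j: "1 \<le> j" "j \<le> n"
  shows "v_vec j (z,ds) = (if xt ds z j then (Cnt (xt ds z) j, 0) else (0, Cnt (\<lambda>j'. \<not> xt ds z j') j))"
proof -
  obtain t where t: "tidx ds j = t" by simp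
  define c where "c = j - psum ds t"
  have cf: "cnt (odd t) j = (\<Sum>i\<in>{i. i<t \<and> odd i = odd t}. ds!i) + c"
    using cnt_formula[OF j, of "odd t"] unfolding t c_def by simp
  have cx: "cnt (odd t) j = Cnt (xt ds z) j" if "xt ds z j"
  proof -
    have "{j'\<in>{1..j}. odd (tidx ds j') = odd t} = {j'\<in>{1..j}. xt ds z j'}"
      using that t unfolding xt_def by auto
    then show ?thesis unfolding cnt_def Cnt_def by simp
  qed
  have cy: "cnt (odd t) j = Cnt (\<lambda>j'. \<not> xt ds z j') j" if "\<not> xt ds z j"
  proof -
    have "{j'\<in>{1..j}. odd (tidx ds j') = odd t} = {j'\<in>{1..j}. \<not> xt ds z j'}"
      using that t unfolding xt_def by auto
    then show ?thesis unfolding cnt_def Cnt_def by simp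
  qed
  have os: "{i. i<t \<and> odd i = odd t} = {i. i < t \<and> odd i}" if "odd t" using that by auto
  have es: "{i. i<t \<and> odd i = odd t} = {i. i < t \<and> even i}" if "even t" using that by auto
  have vv: "v_vec j (z,ds) = (if z = 1 then (if odd t then (oddsum ds t + c, 0) else (0, evensum ds t + c))
       else (if odd t then (0, oddsum ds t + c) else (evensum ds t + c, 0)))"
    unfolding v_vec_def by (simp add: Let_def t c_def)
  show ?thesis
  proof (cases "z = 1")
    case True
    then show ?thesis
    proof (cases "odd t")
      case True
      then have "xt ds z j" using \<open>z = 1\<close> t unfolding xt_def by simp
      then show ?thesis using vv cf cx os True \<open>z = 1\<close> unfolding oddsum_def by simp
    next
      case False
      then have "\<not> xt ds z j" using \<open>z = 1\<close> t unfolding xt_def by simp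
      then show ?thesis using vv cf cy es False \<open>z = 1\<close> unfolding evensum_def by simp
    qed
  next
    case False
    then have z0: "z = 0" using z by simp
    then show ?thesis
    proof (cases "odd t")
      case True
      then have "\<not> xt ds z j" using z0 t unfolding xt_def by simp
      then show ?thesis using vv cf cy os True z0 unfolding oddsum_def by simp
    next
      case False
      then have "xt ds z j" using z0 t unfolding xt_def by simp
      then show ?thesis using vv cf cx es False z0 unfolding evensum_def by simp
    qed
  qed
qed

end

lemma Cnt_mono: "j \<le> N \<Longrightarrow> Cnt P j \<le> Cnt P N"
  unfolding Cnt_def by (rule card_mono) auto

lemma Cnt_le: "Cnt P j \<le> j"
proof -
  have "Cnt P j \<le> card {1..j}" unfolding Cnt_def by (rule card_mono) auto
  then show ?thesis by simp
qed

lemma Cnt_pos: "1 \<le> j \<Longrightarrow> P j \<Longrightarrow> 1 \<le> Cnt P j"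
proof -
  assume "1 \<le> j" "P j"
  then have "{j'\<in>{1..j}. P j'} \<noteq> {}" by auto
  then show "1 \<le> Cnt P j" unfolding Cnt_def by (simp add: Suc_le_eq card_gt_0_iff)
qed

lemma Cnt_part: "Cnt P N + Cnt (\<lambda>j. \<not> P j) N = N"
proof -
  have "card {j\<in>{1..N}. P j} + card {j\<in>{1..N}. \<not> P j} = card ({j\<in>{1..N}. P j} \<union> {j\<in>{1..N}. \<not> P j})"
    by (rule card_Un_disjoint[symmetric]) auto
  also have "{j\<in>{1..N}. P j} \<union> {j\<in>{1..N}. \<not> P j} = {1..N}" by auto
  finally show ?thesis unfolding Cnt_def by simp
qed

lemma Cnt_Suc: "Cnt P (Suc N) = Cnt P N + (if P (Suc N) then 1 else 0)"
proof -
  have "{j\<in>{1..Suc N}. P j} = (if P (Suc N) then insert (Suc N) {j\<in>{1..N}. P j} else {j\<in>{1..N}. P j})"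
    by (auto simp: le_Suc_eq)
  then show ?thesis unfolding Cnt_def by simp
qed

lemma Cnt_ivt: "1 \<le> a \<Longrightarrow> a \<le> Cnt P N \<Longrightarrow> \<exists>j. 1 \<le> j \<and> j \<le> N \<and> P j \<and> Cnt P j = a"
proof (induction N)
  case 0 then show ?case by (simp add: Cnt_def)
next
  case (Suc N)
  show ?case
  proof (cases "a \<le> Cnt P N")
    case True then show ?thesis using Suc by (meson le_SucI)
  next
    case False
    then have "P (Suc N)" "Cnt P (Suc N) = a" using Suc.prems Cnt_Suc[of P N] by (auto split: if_splits)
    then show ?thesis by (intro exI[of _ "Suc N"]) auto
  qed
qed


lemma A_inj:
  assumes "\<beta> \<in> Lambda3 n" "\<beta>' \<in> Lambda3 n" "A_mul n \<beta> = A_mul n \<beta>'"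
  shows "\<beta> = \<beta>'"
proof -
  obtain b1 b2 b3 where b: "\<beta> = (b1,b2,b3)" by (cases \<beta>) auto
  obtain c1 c2 c3 where c: "\<beta>' = (c1,c2,c3)" by (cases \<beta>') auto
  have bl: "b1 + b2 + b3 \<le> n" "c1 + c2 + c3 \<le> n" using assms(1,2) b c unfolding Lambda3_def by auto
  have e1: "b1 + b2 + n * b3 = c1 + c2 + n * c3" and e2: "b2 + (n+1) * b3 = c2 + (n+1) * c3"
    using assms(3) b c by auto
  have b3c3: "b3 = c3"
  proof (rule ccontr)
    assume "b3 \<noteq> c3"
    then have "b3 < c3 \<or> c3 < b3" by auto
    then show False
    proof
      assume "b3 < c3"
      then have "(n+1) * (b3 + 1) \<le> (n+1) * c3" by (intro mult_le_mono2) simp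
      then have "(n+1) * b3 + (n+1) \<le> (n+1) * c3" by (simp add: algebra_simps)
      then show False using e2 bl by linarith
    next
      assume "c3 < b3"
      then have "(n+1) * (c3 + 1) \<le> (n+1) * b3" by (intro mult_le_mono2) simp
      then have "(n+1) * c3 + (n+1) \<le> (n+1) * b3" by (simp add: algebra_simps)
      then show False using e2 bl by linarith
    qed
  qed
  then have "b2 = c2" using e2 by simp
  moreover have "b1 = c1" using e1 b3c3 \<open>b2 = c2\<close> by simp
  ultimately show ?thesis using b c b3c3 by simp
qed

lemma A_0q0: "A_mul n (0,q,0) = (q,q)" by simp
lemma A_aq0: "A_mul n (a,q,0) = (a+q,q)" by simp
lemma A_0qb: "A_mul n (0,q,b) = (q + n*b, b + q + n*b)" by (simp add: algebra_simps)

context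
  fixes n :: nat and ds :: "nat list" and z :: nat
  assumes ne: "ds \<noteq> []" and d0: "ds ! 0 = 0" and dpos: "\<forall>i\<in>{1..<length ds}. 1 \<le> ds ! i"
    and dsum: "sum_list ds = n" and z01: "z \<in> {0,1}"
begin

abbreviation "XT \<equiv> xt ds z"
abbreviation "YT \<equiv> (\<lambda>j. \<not> xt ds z j)"

lemma vf: "1 \<le> j \<Longrightarrow> j \<le> n \<Longrightarrow> v_vec j (z,ds) = (if XT j then (Cnt XT j, 0) else (0, Cnt YT j))"
  using v_form[OF ne d0 dpos dsum z01] by blast

lemma ray_x:
  assumes "1 \<le> j" "j \<le> n" "XT j"
  shows "(\<lambda>(a, b). (a + r_val n j (z,ds), b + r_val n j (z,ds))) ` T_set n j (z,ds)
       = {A_mul n (Cnt XT j, q, 0) | q. q \<le> n - j}"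
  using vf[OF assms(1,2)] assms(3) unfolding T_set_def r_val_def by (auto simp: image_iff)

lemma ray_y:
  assumes "1 \<le> j" "j \<le> n" "\<not> XT j"
  shows "(\<lambda>(a, b). (a + r_val n j (z,ds), b + r_val n j (z,ds))) ` T_set n j (z,ds)
       = {A_mul n (0, q, Cnt YT j) | q. q \<le> n - j}"
  using vf[OF assms(1,2)] assms(3) unfolding T_set_def r_val_def A_0qb by (auto simp: image_iff algebra_simps)

lemma Tp_char:
  "w \<in> T'_set n (z,ds) \<longleftrightarrow>
    (\<exists>q. 1 \<le> q \<and> q \<le> n \<and> w = A_mul n (0,q,0)) \<or>
    (\<exists>j q. 1 \<le> j \<and> j \<le> n \<and> q \<le> n - j \<and> XT j \<and> w = A_mul n (Cnt XT j, q, 0)) \<or>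
    (\<exists>j q. 1 \<le> j \<and> j \<le> n \<and> q \<le> n - j \<and> \<not> XT j \<and> w = A_mul n (0, q, Cnt YT j))"
proof -
  have T0: "T0_set n = {A_mul n (0,q,0) | q. 1 \<le> q \<and> q \<le> n}" unfolding T0_set_def by simp
  have "w \<in> (\<Union>j\<in>{1..n}. (\<lambda>(a, b). (a + r_val n j (z,ds), b + r_val n j (z,ds))) ` T_set n j (z,ds))
     \<longleftrightarrow> (\<exists>j\<in>{1..n}. w \<in> (\<lambda>(a, b). (a + r_val n j (z,ds), b + r_val n j (z,ds))) ` T_set n j (z,ds))"
    by blast
  moreover have "\<dots> \<longleftrightarrow> (\<exists>j q. 1 \<le> j \<and> j \<le> n \<and> q \<le> n - j \<and> XT j \<and> w = A_mul n (Cnt XT j, q, 0)) \<or>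
    (\<exists>j q. 1 \<le> j \<and> j \<le> n \<and> q \<le> n - j \<and> \<not> XT j \<and> w = A_mul n (0, q, Cnt YT j))"
  proof
    assume "\<exists>j\<in>{1..n}. w \<in> (\<lambda>(a, b). (a + r_val n j (z,ds), b + r_val n j (z,ds))) ` T_set n j (z,ds)"
    then obtain j where jj: "j \<in> {1..n}" and j3: "w \<in> (\<lambda>(a, b). (a + r_val n j (z,ds), b + r_val n j (z,ds))) ` T_set n j (z,ds)"
      by blast
    have j: "1 \<le> j" "j \<le> n" "w \<in> (\<lambda>(a, b). (a + r_val n j (z,ds), b + r_val n j (z,ds))) ` T_set n j (z,ds)"
      using jj j3 by auto
    show "(\<exists>j q. 1 \<le> j \<and> j \<le> n \<and> q \<le> n - j \<and> XT j \<and> w = A_mul n (Cnt XT j, q, 0)) \<or>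
    (\<exists>j q. 1 \<le> j \<and> j \<le> n \<and> q \<le> n - j \<and> \<not> XT j \<and> w = A_mul n (0, q, Cnt YT j))"
    proof (cases "XT j")
      case True
      have "w \<in> {A_mul n (Cnt XT j, q, 0) | q. q \<le> n - j}" using j(3) unfolding ray_x[OF j(1,2) True] .
      then obtain q where "q \<le> n - j" "w = A_mul n (Cnt XT j, q, 0)" by blast
      then show ?thesis using j True by (intro disjI1 exI conjI) auto
    next
      case False
      have "w \<in> {A_mul n (0, q, Cnt YT j) | q. q \<le> n - j}" using j(3) unfolding ray_y[OF j(1,2) False] .
      then obtain q where "q \<le> n - j" "w = A_mul n (0, q, Cnt YT j)" by blast
      then show ?thesis using j False by (intro disjI2 exI conjI) auto
    qed
  next
    assume "(\<exists>j q. 1 \<le> j \<and> j \<le> n \<and> q \<le> n - j \<and> XT j \<and> w = A_mul n (Cnt XT j, q, 0)) \<or>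
    (\<exists>j q. 1 \<le> j \<and> j \<le> n \<and> q \<le> n - j \<and> \<not> XT j \<and> w = A_mul n (0, q, Cnt YT j))"
    then show "\<exists>j\<in>{1..n}. w \<in> (\<lambda>(a, b). (a + r_val n j (z,ds), b + r_val n j (z,ds))) ` T_set n j (z,ds)"
    proof
      assume "\<exists>j q. 1 \<le> j \<and> j \<le> n \<and> q \<le> n - j \<and> XT j \<and> w = A_mul n (Cnt XT j, q, 0)"
      then obtain j q where jq: "1 \<le> j" "j \<le> n" "q \<le> n - j" "XT j" "w = A_mul n (Cnt XT j, q, 0)" by blast
      then show ?thesis using ray_x[OF jq(1,2,4)] by (intro bexI[of _ j]) auto
    next
      assume "\<exists>j q. 1 \<le> j \<and> j \<le> n \<and> q \<le> n - j \<and> \<not> XT j \<and> w = A_mul n (0, q, Cnt YT j)"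
      then obtain j q where jq: "1 \<le> j" "j \<le> n" "q \<le> n - j" "\<not> XT j" "w = A_mul n (0, q, Cnt YT j)" by blast
      then show ?thesis using ray_y[OF jq(1,2,4)] by (intro bexI[of _ j]) auto
    qed
  qed
  moreover have "w \<in> T0_set n \<longleftrightarrow> (\<exists>q. 1 \<le> q \<and> q \<le> n \<and> w = A_mul n (0,q,0))"
    unfolding T0 by blast
  ultimately show ?thesis unfolding T'_set_def Un_iff by argo
qed


lemma Cx_bounds: "1 \<le> j \<Longrightarrow> XT j \<Longrightarrow> 1 \<le> Cnt XT j \<and> Cnt XT j \<le> j"
  using Cnt_pos[of j XT] Cnt_le[of XT j] by simp

lemma Cy_bounds: "1 \<le> j \<Longrightarrow> \<not> XT j \<Longrightarrow> 1 \<le> Cnt YT j \<and> Cnt YT j \<le> j"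
  using Cnt_pos[of j YT] Cnt_le[of YT j] by simp

lemma L3_0: "1 \<le> q \<Longrightarrow> q \<le> n \<Longrightarrow> (0,q,0) \<in> Lambda3 n"
  unfolding Lambda3_def by simp

lemma L3_x: "1 \<le> j \<Longrightarrow> j \<le> n \<Longrightarrow> q \<le> n - j \<Longrightarrow> XT j \<Longrightarrow> (Cnt XT j, q, 0) \<in> Lambda3 n"
  using Cx_bounds[of j] unfolding Lambda3_def by auto

lemma L3_y: "1 \<le> j \<Longrightarrow> j \<le> n \<Longrightarrow> q \<le> n - j \<Longrightarrow> \<not> XT j \<Longrightarrow> (0, q, Cnt YT j) \<in> Lambda3 n"
  using Cy_bounds[of j] unfolding Lambda3_def by auto

definition Jset :: "(nat \<times> nat \<times> nat) set" where
  "Jset = {\<beta>\<in>Lambda3 n. A_mul n \<beta> \<in> T'_set n (z,ds)}"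

lemma Jset_char:
  "\<beta> \<in> Jset \<longleftrightarrow>
    (\<exists>q. 1 \<le> q \<and> q \<le> n \<and> \<beta> = (0,q,0)) \<or>
    (\<exists>j q. 1 \<le> j \<and> j \<le> n \<and> q \<le> n - j \<and> XT j \<and> \<beta> = (Cnt XT j, q, 0)) \<or>
    (\<exists>j q. 1 \<le> j \<and> j \<le> n \<and> q \<le> n - j \<and> \<not> XT j \<and> \<beta> = (0, q, Cnt YT j))"
proof
  assume b: "\<beta> \<in> Jset"
  then have bL: "\<beta> \<in> Lambda3 n" and bT: "A_mul n \<beta> \<in> T'_set n (z,ds)" unfolding Jset_def by auto
  from bT[unfolded Tp_char] show "(\<exists>q. 1 \<le> q \<and> q \<le> n \<and> \<beta> = (0,q,0)) \<or>
    (\<exists>j q. 1 \<le> j \<and> j \<le> n \<and> q \<le> n - j \<and> XT j \<and> \<beta> = (Cnt XT j, q, 0)) \<or>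
    (\<exists>j q. 1 \<le> j \<and> j \<le> n \<and> q \<le> n - j \<and> \<not> XT j \<and> \<beta> = (0, q, Cnt YT j))"
  proof (elim disjE exE conjE)
    fix q assume q: "1 \<le> q" "q \<le> n" "A_mul n \<beta> = A_mul n (0,q,0)"
    then have "\<beta> = (0,q,0)" using A_inj[OF bL L3_0[OF q(1,2)]] by simp
    then show ?thesis using q by blast
  next
    fix j q assume q: "1 \<le> j" "j \<le> n" "q \<le> n - j" "XT j" "A_mul n \<beta> = A_mul n (Cnt XT j, q, 0)"
    then have "\<beta> = (Cnt XT j, q, 0)" using A_inj[OF bL L3_x[OF q(1-4)]] by simp
    then show ?thesis using q by blast
  next
    fix j q assume q: "1 \<le> j" "j \<le> n" "q \<le> n - j" "\<not> XT j" "A_mul n \<beta> = A_mul n (0, q, Cnt YT j)"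
    then have "\<beta> = (0, q, Cnt YT j)" using A_inj[OF bL L3_y[OF q(1-4)]] by simp
    then show ?thesis using q by blast
  qed
next
  assume "(\<exists>q. 1 \<le> q \<and> q \<le> n \<and> \<beta> = (0,q,0)) \<or>
    (\<exists>j q. 1 \<le> j \<and> j \<le> n \<and> q \<le> n - j \<and> XT j \<and> \<beta> = (Cnt XT j, q, 0)) \<or>
    (\<exists>j q. 1 \<le> j \<and> j \<le> n \<and> q \<le> n - j \<and> \<not> XT j \<and> \<beta> = (0, q, Cnt YT j))"
  then show "\<beta> \<in> Jset"
  proof (elim disjE exE conjE)
    fix q assume q: "1 \<le> q" "q \<le> n" "\<beta> = (0,q,0)"
    have "A_mul n \<beta> \<in> T'_set n (z,ds)" unfolding Tp_char using q by blast
    then show ?thesis unfolding Jset_def using L3_0[OF q(1,2)] q(3) by simp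
  next
    fix j q assume q: "1 \<le> j" "j \<le> n" "q \<le> n - j" "XT j" "\<beta> = (Cnt XT j, q, 0)"
    have "A_mul n \<beta> \<in> T'_set n (z,ds)" unfolding Tp_char using q by blast
    then show ?thesis unfolding Jset_def using L3_x[OF q(1-4)] q(5) by simp
  next
    fix j q assume q: "1 \<le> j" "j \<le> n" "q \<le> n - j" "\<not> XT j" "\<beta> = (0, q, Cnt YT j)"
    have "A_mul n \<beta> \<in> T'_set n (z,ds)" unfolding Tp_char using q by blast
    then show ?thesis unfolding Jset_def using L3_y[OF q(1-4)] q(5) by simp
  qed
qed

lemma image_J: "A_mul n ` Jset = T'_set n (z,ds)"
proof
  show "A_mul n ` Jset \<subseteq> T'_set n (z,ds)" unfolding Jset_def by auto
next
  show "T'_set n (z,ds) \<subseteq> A_mul n ` Jset"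
  proof
    fix w assume w: "w \<in> T'_set n (z,ds)"
    have "\<exists>\<beta>\<in>Lambda3 n. A_mul n \<beta> = w"
      using w[unfolded Tp_char]
    proof (elim disjE exE conjE)
      fix q assume q: "1 \<le> q" "q \<le> n" "w = A_mul n (0,q,0)"
      then show ?thesis using L3_0[OF q(1,2)] by blast
    next
      fix j q assume q: "1 \<le> j" "j \<le> n" "q \<le> n - j" "XT j" "w = A_mul n (Cnt XT j, q, 0)"
      then show ?thesis using L3_x[OF q(1-4)] by blast
    next
      fix j q assume q: "1 \<le> j" "j \<le> n" "q \<le> n - j" "\<not> XT j" "w = A_mul n (0, q, Cnt YT j)"
      then show ?thesis using L3_y[OF q(1-4)] by blast
    qed
    then obtain \<beta> where "\<beta> \<in> Lambda3 n" "A_mul n \<beta> = w" by blast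
    then show "w \<in> A_mul n ` Jset" using w unfolding Jset_def by blast
  qed
qed

lemma J_unique:
  assumes "J \<subseteq> Lambda3 n" "A_mul n ` J = T'_set n (z,ds)"
  shows "J = Jset"
proof
  show "J \<subseteq> Jset" using assms unfolding Jset_def by auto
next
  show "Jset \<subseteq> J"
  proof
    fix \<beta> assume b: "\<beta> \<in> Jset"
    then have "A_mul n \<beta> \<in> A_mul n ` J" using assms(2) unfolding Jset_def by auto
    then obtain \<beta>' where b': "\<beta>' \<in> J" "A_mul n \<beta> = A_mul n \<beta>'" by auto
    have "\<beta> = \<beta>'" using A_inj[of \<beta> n \<beta>'] b b' assms(1) unfolding Jset_def by auto
    then show "\<beta> \<in> J" using b' by simp
  qed
qed

lemma struct_J:
  assumes p: "p \<le> n"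
  shows "Cnt XT (n - p) + Cnt YT (n - p) = n - p"
    "\<And>a. 1 \<le> a \<Longrightarrow> a \<le> Cnt XT (n - p) \<Longrightarrow> (a,p,0) \<in> Jset"
    "\<And>b. 1 \<le> b \<Longrightarrow> b \<le> Cnt YT (n - p) \<Longrightarrow> (0,p,b) \<in> Jset"
    "1 \<le> p \<Longrightarrow> (0,p,0) \<in> Jset"
proof -
  show "Cnt XT (n - p) + Cnt YT (n - p) = n - p" by (rule Cnt_part)
next
  fix a assume a: "1 \<le> a" "a \<le> Cnt XT (n - p)"
  obtain j where j: "1 \<le> j" "j \<le> n - p" "XT j" "Cnt XT j = a" using Cnt_ivt[OF a] by blast
  then have "\<exists>j q. 1 \<le> j \<and> j \<le> n \<and> q \<le> n - j \<and> XT j \<and> (a,p,0) = (Cnt XT j, q, 0)"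
    by (intro exI[of _ j] exI[of _ p]) auto
  then show "(a,p,0) \<in> Jset" unfolding Jset_char by blast
next
  fix b assume b: "1 \<le> b" "b \<le> Cnt YT (n - p)"
  obtain j where j: "1 \<le> j" "j \<le> n - p" "\<not> XT j" "Cnt YT j = b" using Cnt_ivt[OF b] by blast
  then have "\<exists>j q. 1 \<le> j \<and> j \<le> n \<and> q \<le> n - j \<and> \<not> XT j \<and> (0,p,b) = (0, q, Cnt YT j)"
    by (intro exI[of _ j] exI[of _ p]) auto
  then show "(0,p,b) \<in> Jset" unfolding Jset_char by blast
next
  assume "1 \<le> p"
  then show "(0,p,0) \<in> Jset" unfolding Jset_char using p by blast
qed

definition phi :: "nat \<times> nat \<Rightarrow> nat \<times> nat \<times> nat" where
  "phi w = (case w of (u,p) \<Rightarrow> if u = 0 then (0,p,0) else if u \<le> Cnt XT (n - p) then (u,p,0)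
            else (0, p, u - Cnt XT (n - p)))"

lemma phi_bij: "bij_betw phi (Lambda2 n) Jset"
proof (rule bij_betw_imageI)
  show "inj_on phi (Lambda2 n)"
  proof (rule inj_onI)
    fix w w' assume "w \<in> Lambda2 n" "w' \<in> Lambda2 n" and e: "phi w = phi w'"
    obtain u p where w: "w = (u,p)" by (cases w) auto
    obtain u' p' where w': "w' = (u',p')" by (cases w') auto
    have pp: "p = p'" using e unfolding w w' phi_def by (auto split: if_splits)
    show "w = w'" using e unfolding w w' phi_def pp by (auto split: if_splits)
  qed
next
  show "phi ` Lambda2 n = Jset"
  proof
    show "phi ` Lambda2 n \<subseteq> Jset"
    proof
      fix \<beta> assume "\<beta> \<in> phi ` Lambda2 n"
      then obtain u p where up: "(u,p) \<in> Lambda2 n" "\<beta> = phi (u,p)" by auto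
      have p: "p \<le> n" "u \<le> n - p" "1 \<le> u + p" using up(1) unfolding Lambda2_def by auto
      note S = struct_J[OF p(1)]
      show "\<beta> \<in> Jset"
      proof (cases "u = 0")
        case True then show ?thesis using up p S(4) unfolding phi_def by simp
      next
        case False
        show ?thesis
        proof (cases "u \<le> Cnt XT (n - p)")
          case True then show ?thesis using up S(2)[of u] False unfolding phi_def by simp
        next
          case F2: False
          have "u - Cnt XT (n - p) \<le> Cnt YT (n - p)" using S(1) p(2) by simp
          then show ?thesis using up S(3)[of "u - Cnt XT (n - p)"] False F2 unfolding phi_def by simp
        qed
      qed
    qed
  next
    show "Jset \<subseteq> phi ` Lambda2 n"
    proof
      fix \<beta> assume b: "\<beta> \<in> Jset"
      from b[unfolded Jset_char] show "\<beta> \<in> phi ` Lambda2 n"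
      proof (elim disjE exE conjE)
        fix q assume q: "1 \<le> q" "q \<le> n" "\<beta> = (0,q,0)"
        have "(0,q) \<in> Lambda2 n" using q unfolding Lambda2_def by simp
        moreover have "phi (0,q) = \<beta>" using q unfolding phi_def by simp
        ultimately show ?thesis by force
      next
        fix j q assume q: "1 \<le> j" "j \<le> n" "q \<le> n - j" "XT j" "\<beta> = (Cnt XT j, q, 0)"
        have cb: "1 \<le> Cnt XT j" "Cnt XT j \<le> j" using Cx_bounds[OF q(1,4)] by auto
        have "Cnt XT j \<le> Cnt XT (n - q)" using q by (intro Cnt_mono) simp
        then have "phi (Cnt XT j, q) = \<beta>" using q cb unfolding phi_def by simp
        moreover have "(Cnt XT j, q) \<in> Lambda2 n" using q cb unfolding Lambda2_def by simp
        ultimately show ?thesis by force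
      next
        fix j q assume q: "1 \<le> j" "j \<le> n" "q \<le> n - j" "\<not> XT j" "\<beta> = (0, q, Cnt YT j)"
        have cb: "1 \<le> Cnt YT j" "Cnt YT j \<le> j" using Cy_bounds[OF q(1,4)] by auto
        have "Cnt YT j \<le> Cnt YT (n - q)" using q by (intro Cnt_mono) simp
        moreover have "Cnt XT (n - q) + Cnt YT (n - q) = n - q" by (rule Cnt_part)
        ultimately have le: "Cnt XT (n - q) + Cnt YT j + q \<le> n" using q by simp
        have "phi (Cnt XT (n - q) + Cnt YT j, q) = \<beta>" using q cb unfolding phi_def by simp
        moreover have "(Cnt XT (n - q) + Cnt YT j, q) \<in> Lambda2 n" using le cb unfolding Lambda2_def by simp
        ultimately show ?thesis by force
      qed
    qed
  qed
qed

lemma card_Jset: "card Jset = lambda2 n"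
  using bij_betw_same_card[OF phi_bij] unfolding lambda2_def by simp

lemma Jset_SA: "Jset \<in> S_A n"
proof -
  define m where "m = lambda2 n"
  have fin: "finite (Lambda2 n)" by (rule finite_Lambda2)
  obtain g where g0: "bij_betw g {0..<card (Lambda2 n)} (Lambda2 n)"
    using ex_bij_betw_nat_finite[OF fin] by blast
  have g: "bij_betw g {..<m} (Lambda2 n)" using g0 unfolding m_def lambda2_def by (simp add: atLeast0LessThan)
  define f where "f = phi \<circ> g"
  have f: "bij_betw f {..<m} Jset" unfolding f_def by (rule bij_betw_trans[OF g phi_bij])
  define Mt where "Mt = mat m m (\<lambda>(i, j). cvec n (f i) (g j))"
  have Mc: "Mt \<in> carrier_mat m m" unfolding Mt_def by simp
  have "det Mt \<noteq> 0"
  proof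
    assume "det Mt = 0"
    then obtain v where v: "v \<in> carrier_vec m" "v \<noteq> 0\<^sub>v m" "Mt *\<^sub>v v = 0\<^sub>v m"
      using det_0_iff_vec_prod_zero[OF Mc] by blast
    define x where "x \<alpha> = v $ (inv_into {..<m} g \<alpha>)" for \<alpha>
    have ginj: "inj_on g {..<m}" using g by (rule bij_betw_imp_inj_on)
    have vx: "v $ j = x (g j)" if "j < m" for j
      unfolding x_def using inv_into_f_f[OF ginj] that by simp
    have cond: "(\<Sum>\<alpha>\<in>Lambda2 n. cvec n \<beta> \<alpha> * x \<alpha>) = 0" if "\<beta> \<in> Jset" for \<beta>
    proof -
      have "\<beta> \<in> f ` {..<m}" using f that unfolding bij_betw_def by simp
      then obtain i where i: "i < m" "f i = \<beta>" by auto
      have "0 = (Mt *\<^sub>v v) $ i" using v(3) i by simp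
      also have "\<dots> = (\<Sum>j\<in>{0..<m}. Mt $$ (i, j) * v $ j)"
        using v(1) i Mc by (simp add: scalar_prod_def)
      also have "\<dots> = (\<Sum>j\<in>{..<m}. cvec n \<beta> (g j) * x (g j))"
        using i vx unfolding Mt_def by (intro sum.cong) (auto simp: atLeast0LessThan)
      also have "\<dots> = (\<Sum>\<alpha>\<in>Lambda2 n. cvec n \<beta> \<alpha> * x \<alpha>)"
        by (rule sum.reindex_bij_betw[OF g])
      finally show ?thesis by simp
    qed
    have x0: "x \<alpha> = 0" if "\<alpha> \<in> Lambda2 n" for \<alpha>
    proof (rule kernel[OF cond _ that])
      fix p assume p: "p \<le> n"
      note S = struct_J[OF p]
      show "\<exists>X Y. X + Y = n - p \<and> (\<forall>a. 1 \<le> a \<and> a \<le> X \<longrightarrow> (a,p,0) \<in> Jset)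
        \<and> (\<forall>b. 1 \<le> b \<and> b \<le> Y \<longrightarrow> (0,p,b) \<in> Jset) \<and> (1 \<le> p \<longrightarrow> (0,p,0) \<in> Jset)"
        using S by blast
    qed (simp)
    have "v = 0\<^sub>v m"
    proof (rule eq_vecI)
      fix j assume "j < dim_vec (0\<^sub>v m)"
      then have j: "j < m" by simp
      have "g j \<in> Lambda2 n" using g j unfolding bij_betw_def by auto
      then show "v $ j = 0\<^sub>v m $ j" using vx[OF j] x0 j by simp
    next
      show "dim_vec v = dim_vec (0\<^sub>v m)" using v(1) by simp
    qed
    then show False using v(2) by simp
  qed
  moreover have "Jset \<subseteq> Lambda3 n" unfolding Jset_def by auto
  moreover have "card Jset = lambda2 n" by (rule card_Jset)
  ultimately show ?thesis unfolding S_A_def m_def Mt_def using f[unfolded m_def] g[unfolded m_def] by blast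
qed

end


theorem proposition3p4:
  fixes n :: nat and eta :: "nat \<times> nat list"
  assumes "1 \<le> n" and "eta \<in> Omega n"
  shows "(\<exists>!J. J \<subseteq> Lambda3 n \<and> A_mul n ` J = T'_set n eta) \<and>
         (\<forall>J. J \<subseteq> Lambda3 n \<and> A_mul n ` J = T'_set n eta \<longrightarrow> J \<in> S_A n)"
proof -
  obtain z ds where eta: "eta = (z,ds)" by (cases eta)
  have pr: "ds \<noteq> []" "ds ! 0 = 0" "\<forall>i\<in>{1..<length ds}. 1 \<le> ds ! i" "sum_list ds = n" "z \<in> {0,1}"
    using assms(2) unfolding Omega_def eta by auto
  note im = image_J[OF pr]
  note un = J_unique[OF pr]
  note sa = Jset_SA[OF pr]
  have sub: "Jset n ds z \<subseteq> Lambda3 n" using sa unfolding S_A_def by simp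
  show ?thesis
  proof
    show "\<exists>!J. J \<subseteq> Lambda3 n \<and> A_mul n ` J = T'_set n eta"
    proof (rule ex1I[of _ "Jset n ds z"])
      show "Jset n ds z \<subseteq> Lambda3 n \<and> A_mul n ` Jset n ds z = T'_set n eta"
        using sub im unfolding eta by simp
    next
      fix J assume "J \<subseteq> Lambda3 n \<and> A_mul n ` J = T'_set n eta"
      then show "J = Jset n ds z" using un unfolding eta by blast
    qed
  next
    show "\<forall>J. J \<subseteq> Lambda3 n \<and> A_mul n ` J = T'_set n eta \<longrightarrow> J \<in> S_A n"
    proof (intro allI impI)
      fix J assume "J \<subseteq> Lambda3 n \<and> A_mul n ` J = T'_set n eta"
      then have "J = Jset n ds z" using un unfolding eta by blast
      then show "J \<in> S_A n" using sa by simp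
    qed
  qed
qed


end
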